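(* Let $V$ be a vertex algebra, $I$ an ideal of $V$, and $M$ a subspace of $V$ with $I\subseteq M$. Then $M$ is an $MZ_{0,-1}$-subspace of $V$ if and only if $M/I$ is an $MZ_{0,-1}$-subspace of the quotient vertex algebra $V/I$.
   Context: Vertex algebras are over $\mathbb{C}$; for $u\in V$ write $Y(u,z)=\sum_{n\in\mathbb{Z}}u_nz^{-n-1}$ with $u_n\in\operatorname{End}V$. An ideal of $V$ is a subspace $I$ with $v_nw\in I$ and $w_nv\in I$ for all $v\in V$, $w\in I$, $n\in\mathbb{Z}$. Iterated products are nested to the right: $v_{n_1}\cdots v_{n_t}v=v_{n_1}(\cdots(v_{n_t}v))$. For a subspace $M\subseteq V$: $r_{0,-1}(M)$ is the set of $v\in V$ for which there is $m\ge 0$ with $v_{n_1}\cdots v_{n_t}v\in M$ for all $t\ge m$ and all $n_1,\dots,n_t\in\{0,-1\}$. $lsr_{0,-1}(M)$ is the set of $v\in V$ such that for every $b\in V$ there is $m\ge0$ with $b_sv_{n_1}\cdots v_{n_t}v\in M$ for all $t\ge m$ and all $s,n_1,\dots,n_t\in\{0,-1\}$. $rsr_{0,-1}(M)$ is the set of $v\in V$ such that for every $w\in V$ there is $m\ge 0$ with $(v_{n_1}\cdots v_{n_t}v)_nw\in M$ for all $t\ge m$ and all $n,n_1,\dots,n_t\in\{0,-1\}$. $sr_{0,-1}(M)=lsr_{0,-1}(M)\cap rsr_{0,-1}(M)$. $M$ is an $MZ_{0,-1}$-subspace of $V$ if $r_{0,-1}(M)=sr_{0,-1}(M)$. *)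

theory Defs
  imports Complex_Main
begin

record 'a vert_alg =
  carrier :: "'a set"
  vzero :: 'a
  vadd :: "'a \<Rightarrow> 'a \<Rightarrow> 'a"
  vsmult :: "complex \<Rightarrow> 'a \<Rightarrow> 'a"
  vac :: 'a
  nprod :: "'a \<Rightarrow> int \<Rightarrow> 'a \<Rightarrow> 'a"

primrec vsum :: "('a, 'b) vert_alg_scheme \<Rightarrow> (nat \<Rightarrow> 'a) \<Rightarrow> nat \<Rightarrow> 'a" where
  "vsum A f 0 = vzero A"
| "vsum A f (Suc N) = vadd A (vsum A f N) (f N)"

definition complex_vs :: "('a, 'b) vert_alg_scheme \<Rightarrow> bool" where
  "complex_vs A \<longleftrightarrow>
     vzero A \<in> carrier A \<and>
     (\<forall>x\<in>carrier A. \<forall>y\<in>carrier A. vadd A x y \<in> carrier A) \<and>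
     (\<forall>c. \<forall>x\<in>carrier A. vsmult A c x \<in> carrier A) \<and>
     (\<forall>x\<in>carrier A. \<forall>y\<in>carrier A. \<forall>z\<in>carrier A. vadd A (vadd A x y) z = vadd A x (vadd A y z)) \<and>
     (\<forall>x\<in>carrier A. \<forall>y\<in>carrier A. vadd A x y = vadd A y x) \<and>
     (\<forall>x\<in>carrier A. vadd A (vzero A) x = x) \<and>
     (\<forall>x\<in>carrier A. \<exists>y\<in>carrier A. vadd A x y = vzero A) \<and>
     (\<forall>a. \<forall>x\<in>carrier A. \<forall>y\<in>carrier A. vsmult A a (vadd A x y) = vadd A (vsmult A a x) (vsmult A a y)) \<and>
     (\<forall>a b. \<forall>x\<in>carrier A. vsmult A (a + b) x = vadd A (vsmult A a x) (vsmult A b x)) \<and>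
     (\<forall>a b. \<forall>x\<in>carrier A. vsmult A (a * b) x = vsmult A a (vsmult A b x)) \<and>
     (\<forall>x\<in>carrier A. vsmult A 1 x = x)"

text \<open>The Borcherds identity
  sum_{i>=0} binom(m,i) (u_{k+i} v)_{m+n-i} w
   = sum_{i>=0} (-1)^i binom(k,i) (u_{m+k-i} v_{n+i} w - (-1)^k v_{n+k-i} u_{m+i} w)
has only finitely many nonzero terms by truncation; we require that the partial sums
up to N agree for all sufficiently large N.\<close>

definition vertex_algebra :: "('a, 'b) vert_alg_scheme \<Rightarrow> bool" where
  "vertex_algebra A \<longleftrightarrow>
     complex_vs A \<and>
     vac A \<in> carrier A \<and>
     (\<forall>u\<in>carrier A. \<forall>n. \<forall>v\<in>carrier A. nprod A u n v \<in> carrier A) \<and>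
     (\<forall>u\<in>carrier A. \<forall>u'\<in>carrier A. \<forall>n. \<forall>v\<in>carrier A.
        nprod A (vadd A u u') n v = vadd A (nprod A u n v) (nprod A u' n v)) \<and>
     (\<forall>c. \<forall>u\<in>carrier A. \<forall>n. \<forall>v\<in>carrier A.
        nprod A (vsmult A c u) n v = vsmult A c (nprod A u n v)) \<and>
     (\<forall>u\<in>carrier A. \<forall>n. \<forall>v\<in>carrier A. \<forall>v'\<in>carrier A.
        nprod A u n (vadd A v v') = vadd A (nprod A u n v) (nprod A u n v')) \<and>
     (\<forall>c. \<forall>u\<in>carrier A. \<forall>n. \<forall>v\<in>carrier A.
        nprod A u n (vsmult A c v) = vsmult A c (nprod A u n v)) \<and>
     (\<forall>u\<in>carrier A. \<forall>v\<in>carrier A. \<exists>N. \<forall>n\<ge>N. nprod A u n v = vzero A) \<and>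
     (\<forall>v\<in>carrier A. \<forall>n. nprod A (vac A) n v = (if n = -1 then v else vzero A)) \<and>
     (\<forall>u\<in>carrier A. nprod A u (-1) (vac A) = u) \<and>
     (\<forall>u\<in>carrier A. \<forall>n\<ge>0. nprod A u n (vac A) = vzero A) \<and>
     (\<forall>u\<in>carrier A. \<forall>v\<in>carrier A. \<forall>w\<in>carrier A. \<forall>m n k :: int.
        \<forall>\<^sub>F N in sequentially.
          vsum A (\<lambda>i. vsmult A ((of_int m :: complex) gchoose i)
                     (nprod A (nprod A u (k + int i) v) (m + n - int i) w)) N
          = vsum A (\<lambda>i. vsmult A ((-1) ^ i * ((of_int k :: complex) gchoose i))
                     (vadd A (nprod A u (m + k - int i) (nprod A v (n + int i) w))
                        (vsmult A (- ((-1) powi k))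
                           (nprod A v (n + k - int i) (nprod A u (m + int i) w))))) N)"

definition subspace_va :: "('a, 'b) vert_alg_scheme \<Rightarrow> 'a set \<Rightarrow> bool" where
  "subspace_va A M \<longleftrightarrow> M \<subseteq> carrier A \<and> vzero A \<in> M \<and>
     (\<forall>x\<in>M. \<forall>y\<in>M. vadd A x y \<in> M) \<and> (\<forall>c. \<forall>x\<in>M. vsmult A c x \<in> M)"

definition ideal_va :: "('a, 'b) vert_alg_scheme \<Rightarrow> 'a set \<Rightarrow> bool" where
  "ideal_va A I \<longleftrightarrow> subspace_va A I \<and>
     (\<forall>v\<in>carrier A. \<forall>w\<in>I. \<forall>n. nprod A v n w \<in> I \<and> nprod A w n v \<in> I)"

definition coset :: "('a, 'b) vert_alg_scheme \<Rightarrow> 'a set \<Rightarrow> 'a \<Rightarrow> 'a set" where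
  "coset A I x = {vadd A x i | i. i \<in> I}"

definition rep :: "'a set \<Rightarrow> 'a" where
  "rep X = (SOME x. x \<in> X)"

definition quotient_va :: "('a, 'b) vert_alg_scheme \<Rightarrow> 'a set \<Rightarrow> 'a set vert_alg" where
  "quotient_va A I =
     \<lparr> carrier = coset A I ` carrier A,
       vzero = coset A I (vzero A),
       vadd = (\<lambda>X Y. coset A I (vadd A (rep X) (rep Y))),
       vsmult = (\<lambda>c X. coset A I (vsmult A c (rep X))),
       vac = coset A I (vac A),
       nprod = (\<lambda>X n Y. coset A I (nprod A (rep X) n (rep Y))) \<rparr>"

definition quotient_sub :: "('a, 'b) vert_alg_scheme \<Rightarrow> 'a set \<Rightarrow> 'a set \<Rightarrow> 'a set set" where
  "quotient_sub A I M = coset A I ` M"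

fun iter_prod :: "('a, 'b) vert_alg_scheme \<Rightarrow> 'a \<Rightarrow> int list \<Rightarrow> 'a" where
  "iter_prod A v [] = v"
| "iter_prod A v (n # ns) = nprod A v n (iter_prod A v ns)"

definition r01 :: "('a, 'b) vert_alg_scheme \<Rightarrow> 'a set \<Rightarrow> 'a set" where
  "r01 A M = {v \<in> carrier A. \<exists>m::nat. \<forall>ns. length ns \<ge> m \<and> set ns \<subseteq> {0, -1}
                 \<longrightarrow> iter_prod A v ns \<in> M}"

definition lsr01 :: "('a, 'b) vert_alg_scheme \<Rightarrow> 'a set \<Rightarrow> 'a set" where
  "lsr01 A M = {v \<in> carrier A. \<forall>b\<in>carrier A. \<exists>m::nat. \<forall>s ns.
                 s \<in> {0, -1} \<and> length ns \<ge> m \<and> set ns \<subseteq> {0, -1}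
                 \<longrightarrow> nprod A b s (iter_prod A v ns) \<in> M}"

definition rsr01 :: "('a, 'b) vert_alg_scheme \<Rightarrow> 'a set \<Rightarrow> 'a set" where
  "rsr01 A M = {v \<in> carrier A. \<forall>w\<in>carrier A. \<exists>m::nat. \<forall>n ns.
                 n \<in> {0, -1} \<and> length ns \<ge> m \<and> set ns \<subseteq> {0, -1}
                 \<longrightarrow> nprod A (iter_prod A v ns) n w \<in> M}"

definition sr01 :: "('a, 'b) vert_alg_scheme \<Rightarrow> 'a set \<Rightarrow> 'a set" where
  "sr01 A M = lsr01 A M \<inter> rsr01 A M"

definition MZ01_subspace :: "('a, 'b) vert_alg_scheme \<Rightarrow> 'a set \<Rightarrow> bool" where
  "MZ01_subspace A M \<longleftrightarrow> subspace_va A M \<and> r01 A M = sr01 A M"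

end

theory Submission
  imports Defs
begin

locale qctx =
  fixes V :: "('a, 'b) vert_alg_scheme" and I :: "'a set"
  assumes va: "vertex_algebra V" and idl: "ideal_va V I"
begin

lemma cvs: "complex_vs V" using va unfolding vertex_algebra_def by (elim conjE) assumption

lemmas cvsD = cvs[unfolded complex_vs_def]
lemmas vaD = va[unfolded vertex_algebra_def]
lemmas idD = idl[unfolded ideal_va_def subspace_va_def]

lemma zero_c: "vzero V \<in> carrier V" using cvsD by (elim conjE) assumption
lemma add_c: "x \<in> carrier V \<Longrightarrow> y \<in> carrier V \<Longrightarrow> vadd V x y \<in> carrier V"
proof -
  have "\<forall>x\<in>carrier V. \<forall>y\<in>carrier V. vadd V x y \<in> carrier V" using cvsD by (elim conjE) assumption
  then show "x \<in> carrier V \<Longrightarrow> y \<in> carrier V \<Longrightarrow> vadd V x y \<in> carrier V" by blast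
qed
lemma sm_c: "x \<in> carrier V \<Longrightarrow> vsmult V c x \<in> carrier V"
proof -
  have "\<forall>c. \<forall>x\<in>carrier V. vsmult V c x \<in> carrier V" using cvsD by (elim conjE) assumption
  then show "x \<in> carrier V \<Longrightarrow> vsmult V c x \<in> carrier V" by blast
qed
lemma assoc: "x \<in> carrier V \<Longrightarrow> y \<in> carrier V \<Longrightarrow> z \<in> carrier V \<Longrightarrow>
   vadd V (vadd V x y) z = vadd V x (vadd V y z)"
proof -
  have "\<forall>x\<in>carrier V. \<forall>y\<in>carrier V. \<forall>z\<in>carrier V. vadd V (vadd V x y) z = vadd V x (vadd V y z)"
    using cvsD by (elim conjE) assumption
  then show "x \<in> carrier V \<Longrightarrow> y \<in> carrier V \<Longrightarrow> z \<in> carrier V \<Longrightarrow>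
   vadd V (vadd V x y) z = vadd V x (vadd V y z)" by blast
qed
lemma comm: "x \<in> carrier V \<Longrightarrow> y \<in> carrier V \<Longrightarrow> vadd V x y = vadd V y x"
proof -
  have "\<forall>x\<in>carrier V. \<forall>y\<in>carrier V. vadd V x y = vadd V y x" using cvsD by (elim conjE) assumption
  then show "x \<in> carrier V \<Longrightarrow> y \<in> carrier V \<Longrightarrow> vadd V x y = vadd V y x" by blast
qed
lemma lzero: "x \<in> carrier V \<Longrightarrow> vadd V (vzero V) x = x"
proof -
  have "\<forall>x\<in>carrier V. vadd V (vzero V) x = x" using cvsD by (elim conjE) assumption
  then show "x \<in> carrier V \<Longrightarrow> vadd V (vzero V) x = x" by blast
qed
lemma rzero: "x \<in> carrier V \<Longrightarrow> vadd V x (vzero V) = x"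
  using lzero comm zero_c by metis
lemma neg_ex: "x \<in> carrier V \<Longrightarrow> \<exists>y\<in>carrier V. vadd V x y = vzero V"
proof -
  have "\<forall>x\<in>carrier V. \<exists>y\<in>carrier V. vadd V x y = vzero V" using cvsD by (elim conjE) assumption
  then show "x \<in> carrier V \<Longrightarrow> \<exists>y\<in>carrier V. vadd V x y = vzero V" by blast
qed
lemma sm_dist: "x \<in> carrier V \<Longrightarrow> vsmult V (a + b) x = vadd V (vsmult V a x) (vsmult V b x)"
proof -
  have "\<forall>a b. \<forall>x\<in>carrier V. vsmult V (a + b) x = vadd V (vsmult V a x) (vsmult V b x)"
    using cvsD by (elim conjE) assumption
  then show "x \<in> carrier V \<Longrightarrow> vsmult V (a + b) x = vadd V (vsmult V a x) (vsmult V b x)" by blast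
qed
lemma sm_one: "x \<in> carrier V \<Longrightarrow> vsmult V 1 x = x"
proof -
  have "\<forall>x\<in>carrier V. vsmult V 1 x = x" using cvsD by (elim conjE) assumption
  then show "x \<in> carrier V \<Longrightarrow> vsmult V 1 x = x" by blast
qed

lemma np_c: "u \<in> carrier V \<Longrightarrow> v \<in> carrier V \<Longrightarrow> nprod V u n v \<in> carrier V"
proof -
  have "\<forall>u\<in>carrier V. \<forall>n. \<forall>v\<in>carrier V. nprod V u n v \<in> carrier V" using vaD by (elim conjE) assumption
  then show "u \<in> carrier V \<Longrightarrow> v \<in> carrier V \<Longrightarrow> nprod V u n v \<in> carrier V" by blast
qed
lemma np_addl: "u \<in> carrier V \<Longrightarrow> u' \<in> carrier V \<Longrightarrow> v \<in> carrier V \<Longrightarrow>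
  nprod V (vadd V u u') n v = vadd V (nprod V u n v) (nprod V u' n v)"
proof -
  have "\<forall>u\<in>carrier V. \<forall>u'\<in>carrier V. \<forall>n. \<forall>v\<in>carrier V.
        nprod V (vadd V u u') n v = vadd V (nprod V u n v) (nprod V u' n v)" using vaD by (elim conjE) assumption
  then show "u \<in> carrier V \<Longrightarrow> u' \<in> carrier V \<Longrightarrow> v \<in> carrier V \<Longrightarrow>
  nprod V (vadd V u u') n v = vadd V (nprod V u n v) (nprod V u' n v)" by blast
qed
lemma np_addr: "u \<in> carrier V \<Longrightarrow> v \<in> carrier V \<Longrightarrow> v' \<in> carrier V \<Longrightarrow>
  nprod V u n (vadd V v v') = vadd V (nprod V u n v) (nprod V u n v')"
proof -
  have "\<forall>u\<in>carrier V. \<forall>n. \<forall>v\<in>carrier V. \<forall>v'\<in>carrier V.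
        nprod V u n (vadd V v v') = vadd V (nprod V u n v) (nprod V u n v')" using vaD by (elim conjE) assumption
  then show "u \<in> carrier V \<Longrightarrow> v \<in> carrier V \<Longrightarrow> v' \<in> carrier V \<Longrightarrow>
  nprod V u n (vadd V v v') = vadd V (nprod V u n v) (nprod V u n v')" by blast
qed

lemma I_sub: "I \<subseteq> carrier V" using idD by (elim conjE) assumption
lemma I_zero: "vzero V \<in> I" using idD by (elim conjE) assumption
lemma I_add: "x \<in> I \<Longrightarrow> y \<in> I \<Longrightarrow> vadd V x y \<in> I"
proof -
  have "\<forall>x\<in>I. \<forall>y\<in>I. vadd V x y \<in> I" using idD by (elim conjE) assumption
  then show "x \<in> I \<Longrightarrow> y \<in> I \<Longrightarrow> vadd V x y \<in> I" by blast
qed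
lemma I_sm: "x \<in> I \<Longrightarrow> vsmult V c x \<in> I"
proof -
  have "\<forall>c. \<forall>x\<in>I. vsmult V c x \<in> I" using idD by (elim conjE) assumption
  then show "x \<in> I \<Longrightarrow> vsmult V c x \<in> I" by blast
qed
lemma I_np: "v \<in> carrier V \<Longrightarrow> w \<in> I \<Longrightarrow> nprod V v n w \<in> I \<and> nprod V w n v \<in> I"
proof -
  have "\<forall>v\<in>carrier V. \<forall>w\<in>I. \<forall>n. nprod V v n w \<in> I \<and> nprod V w n v \<in> I" using idD by (elim conjE) assumption
  then show "v \<in> carrier V \<Longrightarrow> w \<in> I \<Longrightarrow> nprod V v n w \<in> I \<and> nprod V w n v \<in> I" by blast
qed
lemma I_np1: "v \<in> carrier V \<Longrightarrow> w \<in> I \<Longrightarrow> nprod V v n w \<in> I" using I_np by blast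
lemma I_np2: "v \<in> carrier V \<Longrightarrow> w \<in> I \<Longrightarrow> nprod V w n v \<in> I" using I_np by blast

lemma zero_sm: assumes "x \<in> carrier V" shows "vsmult V 0 x = vzero V"
proof -
  define z where "z = vsmult V 0 x"
  have zc: "z \<in> carrier V" using sm_c assms z_def by blast
  have zz: "z = vadd V z z" using sm_dist[OF assms, of 0 0] z_def by simp
  obtain w where w: "w \<in> carrier V" "vadd V z w = vzero V" using neg_ex zc by blast
  have "vzero V = vadd V (vadd V z z) w" using zz w by simp
  also have "\<dots> = vadd V z (vadd V z w)" using assoc zc w by blast
  also have "\<dots> = z" using w rzero zc by simp
  finally show ?thesis using z_def by simp
qed

lemma add_neg: assumes "x \<in> carrier V" shows "vadd V x (vsmult V (-1) x) = vzero V"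
proof -
  have "vadd V x (vsmult V (-1) x) = vadd V (vsmult V 1 x) (vsmult V (-1) x)"
    using sm_one assms by simp
  also have "\<dots> = vsmult V (1 + -1) x" using sm_dist[OF assms, of 1 "-1"] by simp
  finally show ?thesis using zero_sm assms by simp
qed

lemma self_coset: "x \<in> carrier V \<Longrightarrow> x \<in> coset V I x"
  unfolding coset_def using rzero I_zero by force

lemma coset_eq: assumes x: "x \<in> carrier V" and y: "y \<in> coset V I x"
  shows "coset V I y = coset V I x"
proof -
  obtain i where i: "i \<in> I" "y = vadd V x i" using y unfolding coset_def by blast
  have ic: "i \<in> carrier V" using i I_sub by blast
  show ?thesis
  proof
    show "coset V I y \<subseteq> coset V I x"
    proof
      fix z assume "z \<in> coset V I y"
      then obtain j where j: "j \<in> I" "z = vadd V y j" unfolding coset_def by blast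
      have "z = vadd V x (vadd V i j)" using j i assoc x ic I_sub by blast
      then show "z \<in> coset V I x" unfolding coset_def using I_add i j by blast
    qed
  next
    show "coset V I x \<subseteq> coset V I y"
    proof
      fix z assume "z \<in> coset V I x"
      then obtain k where k: "k \<in> I" "z = vadd V x k" unfolding coset_def by blast
      have kc: "k \<in> carrier V" using k I_sub by blast
      define ni where "ni = vsmult V (-1) i"
      have nic: "ni \<in> carrier V" using sm_c ic ni_def by blast
      have niI: "ni \<in> I" using I_sm i ni_def by blast
      have "vadd V y (vadd V ni k) = vadd V x (vadd V i (vadd V ni k))"
        using i assoc x ic nic kc add_c by simp
      also have "vadd V i (vadd V ni k) = vadd V (vadd V i ni) k"
        using assoc ic nic kc by simp
      also have "\<dots> = k" using add_neg ic ni_def lzero kc by simp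
      finally have "z = vadd V y (vadd V ni k)" using k by simp
      then show "z \<in> coset V I y" unfolding coset_def using I_add niI k by blast
    qed
  qed
qed

lemma rep_in: "x \<in> carrier V \<Longrightarrow> rep (coset V I x) \<in> coset V I x"
  unfolding rep_def using self_coset by (metis someI)

lemma coset_c: "x \<in> carrier V \<Longrightarrow> coset V I x \<subseteq> carrier V"
  unfolding coset_def using add_c I_sub by blast

lemma np_cong: assumes x: "x \<in> carrier V" and y: "y \<in> carrier V"
  and x': "x' \<in> coset V I x" and y': "y' \<in> coset V I y"
  shows "nprod V x' n y' \<in> coset V I (nprod V x n y)"
proof -
  obtain i where i: "i \<in> I" "x' = vadd V x i" using x' unfolding coset_def by blast
  obtain j where j: "j \<in> I" "y' = vadd V y j" using y' unfolding coset_def by blast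
  have ic: "i \<in> carrier V" and jc: "j \<in> carrier V" using i j I_sub by auto
  have yc': "y' \<in> carrier V" using j add_c y jc by simp
  have "nprod V x' n y' = vadd V (nprod V x n y') (nprod V i n y')"
    using np_addl i x ic yc' by simp
  also have "nprod V x n y' = vadd V (nprod V x n y) (nprod V x n j)"
    using np_addr j x y jc by simp
  finally have e: "nprod V x' n y' = vadd V (nprod V x n y) (vadd V (nprod V x n j) (nprod V i n y'))"
    using assoc np_c x y jc ic yc' by simp
  have "vadd V (nprod V x n j) (nprod V i n y') \<in> I"
    using I_add I_np1 I_np2 x j i yc' by blast
  then show ?thesis using e unfolding coset_def by blast
qed

lemma qnp: assumes "x \<in> carrier V" "y \<in> carrier V"
  shows "nprod (quotient_va V I) (coset V I x) n (coset V I y) = coset V I (nprod V x n y)"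
proof -
  have "nprod V (rep (coset V I x)) n (rep (coset V I y)) \<in> coset V I (nprod V x n y)"
    using np_cong rep_in assms by blast
  then have "coset V I (nprod V (rep (coset V I x)) n (rep (coset V I y))) = coset V I (nprod V x n y)"
    using coset_eq np_c assms by blast
  then show ?thesis unfolding quotient_va_def by simp
qed

lemma qiter: "v \<in> carrier V \<Longrightarrow>
  iter_prod (quotient_va V I) (coset V I v) ns = coset V I (iter_prod V v ns) \<and> iter_prod V v ns \<in> carrier V"
  by (induction ns) (auto simp: qnp np_c)

lemma qcarrier: "carrier (quotient_va V I) = coset V I ` carrier V"
  unfolding quotient_va_def by simp

context
  fixes M assumes sM: "subspace_va V M" and IM: "I \<subseteq> M"
begin

lemma M_mem: assumes "z \<in> carrier V" shows "coset V I z \<in> coset V I ` M \<longleftrightarrow> z \<in> M"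
proof
  assume "coset V I z \<in> coset V I ` M"
  then obtain m where m: "m \<in> M" "coset V I z = coset V I m" by blast
  have "z \<in> coset V I m" using m self_coset assms by auto
  then obtain i where "i \<in> I" "z = vadd V m i" unfolding coset_def by blast
  then show "z \<in> M" using sM IM m unfolding subspace_va_def by blast
qed auto

lemma r01_iff: "v \<in> carrier V \<Longrightarrow> coset V I v \<in> r01 (quotient_va V I) (quotient_sub V I M) \<longleftrightarrow> v \<in> r01 V M"
  unfolding r01_def quotient_sub_def using qiter M_mem qcarrier by auto

lemma key1: "b \<in> carrier V \<Longrightarrow> v \<in> carrier V \<Longrightarrow>
  (nprod (quotient_va V I) (coset V I b) s (iter_prod (quotient_va V I) (coset V I v) ns) \<in> coset V I ` M)
   = (nprod V b s (iter_prod V v ns) \<in> M)"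
  using qiter qnp M_mem np_c by simp

lemma key2: "w \<in> carrier V \<Longrightarrow> v \<in> carrier V \<Longrightarrow>
  (nprod (quotient_va V I) (iter_prod (quotient_va V I) (coset V I v) ns) n (coset V I w) \<in> coset V I ` M)
   = (nprod V (iter_prod V v ns) n w \<in> M)"
  using qiter qnp M_mem np_c by simp

lemma lsr01_iff: assumes v: "v \<in> carrier V"
  shows "coset V I v \<in> lsr01 (quotient_va V I) (quotient_sub V I M) \<longleftrightarrow> v \<in> lsr01 V M"
  unfolding lsr01_def quotient_sub_def qcarrier using v key1 by auto

lemma rsr01_iff: assumes v: "v \<in> carrier V"
  shows "coset V I v \<in> rsr01 (quotient_va V I) (quotient_sub V I M) \<longleftrightarrow> v \<in> rsr01 V M"
  unfolding rsr01_def quotient_sub_def qcarrier using v key2 by auto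

lemma sr01_iff: "v \<in> carrier V \<Longrightarrow> coset V I v \<in> sr01 (quotient_va V I) (quotient_sub V I M) \<longleftrightarrow> v \<in> sr01 V M"
  unfolding sr01_def using lsr01_iff rsr01_iff by blast

lemma qsub: "subspace_va (quotient_va V I) (quotient_sub V I M)"
proof -
  have Mc: "M \<subseteq> carrier V" and M0: "vzero V \<in> M" and Ma: "\<And>x y. x \<in> M \<Longrightarrow> y \<in> M \<Longrightarrow> vadd V x y \<in> M"
    and Ms: "\<And>c x. x \<in> M \<Longrightarrow> vsmult V c x \<in> M"
    using sM unfolding subspace_va_def by blast+
  have repM: "\<And>x. x \<in> M \<Longrightarrow> rep (coset V I x) \<in> M"
  proof -
    fix x assume x: "x \<in> M"
    then have "rep (coset V I x) \<in> coset V I x" using rep_in Mc by blast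
    then obtain i where i: "i \<in> I" "rep (coset V I x) = vadd V x i" unfolding coset_def by blast
    have "i \<in> M" using i(1) IM by (rule subsetD[rotated])
    from Ma[OF x this] show "rep (coset V I x) \<in> M" using i(2) by simp
  qed
  show ?thesis unfolding subspace_va_def quotient_sub_def
    apply (intro conjI)
    subgoal using Mc qcarrier by auto
    subgoal using M0 unfolding quotient_va_def by simp
    subgoal unfolding quotient_va_def
    proof (intro ballI)
      fix X Y assume "X \<in> coset V I ` M" "Y \<in> coset V I ` M"
      then obtain x y where "x \<in> M" "y \<in> M" "X = coset V I x" "Y = coset V I y" by blast
      then have "vadd V (rep X) (rep Y) \<in> M" using repM Ma by blast
      then show "vadd \<lparr>carrier = coset V I ` carrier V, vzero = coset V I (vzero V),
              vadd = \<lambda>X Y. coset V I (vadd V (rep X) (rep Y)),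
              vsmult = \<lambda>c X. coset V I (vsmult V c (rep X)), vac = coset V I (vac V),
              nprod = \<lambda>X n Y. coset V I (nprod V (rep X) n (rep Y))\<rparr> X Y \<in> coset V I ` M" by simp
    qed
    subgoal unfolding quotient_va_def
    proof (intro allI ballI)
      fix c X assume "X \<in> coset V I ` M"
      then obtain x where "x \<in> M" "X = coset V I x" by blast
      then have "vsmult V c (rep X) \<in> M" using repM Ms by blast
      then show "vsmult \<lparr>carrier = coset V I ` carrier V, vzero = coset V I (vzero V),
              vadd = \<lambda>X Y. coset V I (vadd V (rep X) (rep Y)),
              vsmult = \<lambda>c X. coset V I (vsmult V c (rep X)), vac = coset V I (vac V),
              nprod = \<lambda>X n Y. coset V I (nprod V (rep X) n (rep Y))\<rparr> c X \<in> coset V I ` M" by simp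
    qed
    done
qed

end
end

theorem mainTheorem8:
  fixes V :: "'a vert_alg" and I M :: "'a set"
  assumes "vertex_algebra V"
    and "ideal_va V I"
    and "subspace_va V M"
    and "I \<subseteq> M"
  shows "MZ01_subspace V M \<longleftrightarrow> MZ01_subspace (quotient_va V I) (quotient_sub V I M)"
proof -
  interpret qctx V I using assms(1,2) by (rule qctx.intro)
  have qs: "subspace_va (quotient_va V I) (quotient_sub V I M)" using qsub assms(3,4) .
  have rV: "r01 V M \<subseteq> carrier V" "sr01 V M \<subseteq> carrier V"
    unfolding r01_def sr01_def lsr01_def by auto
  have rQ: "r01 (quotient_va V I) (quotient_sub V I M) \<subseteq> coset V I ` carrier V"
    "sr01 (quotient_va V I) (quotient_sub V I M) \<subseteq> coset V I ` carrier V"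
    unfolding r01_def sr01_def lsr01_def qcarrier by auto
  have r: "\<And>v. v \<in> carrier V \<Longrightarrow> coset V I v \<in> r01 (quotient_va V I) (quotient_sub V I M) \<longleftrightarrow> v \<in> r01 V M"
    using r01_iff assms(3,4) by blast
  have sr: "\<And>v. v \<in> carrier V \<Longrightarrow> coset V I v \<in> sr01 (quotient_va V I) (quotient_sub V I M) \<longleftrightarrow> v \<in> sr01 V M"
    using sr01_iff assms(3,4) by blast
  have "r01 V M = sr01 V M \<longleftrightarrow> r01 (quotient_va V I) (quotient_sub V I M) = sr01 (quotient_va V I) (quotient_sub V I M)"
  proof
    assume e: "r01 V M = sr01 V M"
    show "r01 (quotient_va V I) (quotient_sub V I M) = sr01 (quotient_va V I) (quotient_sub V I M)"
    proof (rule set_eqI)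
      fix X show "X \<in> r01 (quotient_va V I) (quotient_sub V I M) \<longleftrightarrow> X \<in> sr01 (quotient_va V I) (quotient_sub V I M)"
      proof (cases "X \<in> coset V I ` carrier V")
        case True
        then obtain v where "v \<in> carrier V" "X = coset V I v" by blast
        then show ?thesis using r sr e by simp
      next
        case False then show ?thesis using rQ by blast
      qed
    qed
  next
    assume e: "r01 (quotient_va V I) (quotient_sub V I M) = sr01 (quotient_va V I) (quotient_sub V I M)"
    show "r01 V M = sr01 V M"
    proof (rule set_eqI)
      fix v show "v \<in> r01 V M \<longleftrightarrow> v \<in> sr01 V M"
      proof (cases "v \<in> carrier V")
        case True
        then show ?thesis using r[OF True] sr[OF True] e by simp
      next
        case False then show ?thesis using rV by blast
      qed
    qed
  qed
  then show ?thesis unfolding MZ01_subspace_def using assms(3) qs by blast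
qed

end
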